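(* Assume (A1) and (A4). Consider Algorithm 2 with parameter choice (P1), any stage $s$ and any inner iteration $k$. Then, with expectation taken over the samples $i_k,j_k$ (conditionally on the past), $$\mathbb E\|x^{k+1}-x^*\|_{G_k}^2\le\mathbb E\|x^k-x^*\|_{G_k}^2-2\eta_s\mathbb E\big(F(x^{k+1})-F(x^* )\big)-2\eta_s\mathbb E\langle\nabla\hat F_{i_k}(x^k)-\nabla F(x^k),x^{k+1}-x^*\rangle+2\eta_s\mathbb E\langle A^T\lambda^{k+1},x^*-x^{k+1}\rangle.$$
   Context: Standing setup. Let $n,m,p,q,r,l\ge1$. For $j\in\{1,\dots,m\}$ let $g_j:\mathbb R^q\to\mathbb R^r$ be continuously differentiable with Jacobian $\partial g_j(x)\in\mathbb R^{r\times q}$; for $i\in\{1,\dots,n\}$ let $f_i:\mathbb R^r\to\mathbb R$ be continuously differentiable. Set $g(x)=\frac1m\sum_{j=1}^m g_j(x)$, $F_i(x)=f_i(g(x))$, $F(x)=\frac1n\sum_{i=1}^nF_i(x)$. Let $R:\mathbb R^l\to\mathbb R$ be closed convex, $A\in\mathbb R^{p\times q}$, $B\in\mathbb R^{p\times l}$; the problem is $\min_{x,\omega}F(x)+R(\omega)$ s.t. $Ax+B\omega=0$, with optimal primal–dual solution $(x^*,\omega^*,\lambda^* )$. $\|\cdot\|$ is the Euclidean norm; for positive definite $H$, $\|x\|_H^2=x^THx$. Assumptions. (A1) Each $F_i$ is convex, $R$ is convex, an optimal primal–dual solution exists, and all $x$-points arising lie in a bounded set. (A4) There is $L_F>0$ with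 $\|(\partial g_j(x))^T\nabla f_i(g(x))-(\partial g_j(y))^T\nabla f_i(g(y))\|\le L_F\|x-y\|$ for all $i,j,x,y$. Algorithm 2 (inputs: integers $S,K\ge1$, $\rho>0$, stepsizes $\eta_s>0$, matrices $G_k$ per stage as below; initial $\tilde x^0=\hat x^0$, $\hat\omega^0$, $\hat\lambda^0$, $\hat G^0=I$). For $s=1,\dots,S$: set $\tilde x=\tilde x^{s-1}$, $x^0=\hat x^{s-1}$, $\omega^0=\hat\omega^{s-1}$, $\lambda^0=\hat\lambda^{s-1}$, $G_0=\hat G^{s-1}$; compute $g(\tilde x)$, $\nabla F(\tilde x)$. For $k=0,\dots,K-1$: (a) $\omega^{k+1}\in\arg\min_\omega R(\omega)+\langle\lambda^k,B\omega\rangle+\frac\rho2\|Ax^k+B\omega\|^2$; (b) compute $g(x^k)$ exactly; (c) draw $i_k$ uniform on $\{1,\dots,n\}$ and $j_k$ uniform on $\{1,\dots,m\}$, independently, and set $\nabla\hat F_{i_k}(x^k)=(\partial g_{j_k}(x^k))^T\nabla f_{i_k}(g(x^k))-(\partial g_{j_k}(\tilde x))^T\nabla f_{i_k}(g(\tilde x))+\nabla F(\tilde x)$; (d) $x^{k+1}=\arg\min_x\langle\nabla\hat F_{i_k}(x^k),x-x^k\rangle+\langle\lambda^k,Ax\rangle+\frac\rho2\|Ax+B\omega^{k+1}\|^2+\frac1{2\eta_s}\|x-x^k\|_{G_k}^2$; (e) $\lambda^{k+1}=\lambda^k+\rho(Ax^{k+1}+B\omega^{k+1})$. End of stage $s$: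 $\tilde x^s=\frac1K\sum_{k=1}^Kx^k$, $\tilde\omega^s=\frac1K\sum_{k=1}^K\omega^k$, $\hat x^s=x^K$, $\hat\omega^s=\omega^K$, $\hat\lambda^s=\lambda^K$, $\hat G^s=G_K$. Parameter choice (P1): $\eta_s=\frac1{(s+1)L_F}$, and in stage $s$ the matrices $G_0,\dots,G_K$ are scalar multiples of the identity with $\frac1sI=G_0\succeq G_1\succeq\dots\succeq G_{K-1}=G_K=\frac1{s+1}I$. *)

theory Defs
  imports "HOL-Analysis.Analysis"
begin

definition gavg :: "nat \<Rightarrow> (nat \<Rightarrow> real^'q \<Rightarrow> real^'r) \<Rightarrow> real^'q \<Rightarrow> real^'r" where
  "gavg m g x = (1 / real m) *\<^sub>R (\<Sum>j<m. g j x)"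

definition Fobj :: "nat \<Rightarrow> nat \<Rightarrow> (nat \<Rightarrow> real^'r \<Rightarrow> real) \<Rightarrow> (nat \<Rightarrow> real^'q \<Rightarrow> real^'r)
    \<Rightarrow> real^'q \<Rightarrow> real" where
  "Fobj n m f g x = (1 / real n) * (\<Sum>i<n. f i (gavg m g x))"

definition wnorm2 :: "real^'q^'q \<Rightarrow> real^'q \<Rightarrow> real" where
  "wnorm2 H x = x \<bullet> (H *v x)"

text \<open>Expectation over (i_k, j_k) uniform on {0..<n} x {0..<m}, independent.\<close>
definition Esamp :: "nat \<Rightarrow> nat \<Rightarrow> (nat \<Rightarrow> nat \<Rightarrow> real) \<Rightarrow> real" where
  "Esamp n m X = (\<Sum>i<n. \<Sum>j<m. X i j) / (real n * real m)"

text \<open>Optimal primal-dual solution: saddle point of the Lagrangian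
  L(x,w,lam) = F(x) + R(w) + <lam, Ax + Bw>.\<close>
definition primal_dual_opt ::
  "(real^'q \<Rightarrow> real) \<Rightarrow> (real^'l \<Rightarrow> real) \<Rightarrow> real^'q^'p \<Rightarrow> real^'l^'p
    \<Rightarrow> real^'q \<Rightarrow> real^'l \<Rightarrow> real^'p \<Rightarrow> bool" where
  "primal_dual_opt F R A B xs ws ls \<longleftrightarrow>
     (\<forall>x w lam. F xs + R ws + lam \<bullet> (A *v xs + B *v ws)
                  \<le> F xs + R ws + ls \<bullet> (A *v xs + B *v ws)
               \<and> F xs + R ws + ls \<bullet> (A *v xs + B *v ws)
                  \<le> F x + R w + ls \<bullet> (A *v x + B *v w))"

end

theory Submission
  imports Defs
begin


lemma Esamp_add: "Esamp n m (\<lambda>i j. X i j + Y i j) = Esamp n m X + Esamp n m Y"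
  by (simp add: Esamp_def sum.distrib add_divide_distrib)

lemma Esamp_diff: "Esamp n m (\<lambda>i j. X i j - Y i j) = Esamp n m X - Esamp n m Y"
  by (simp add: Esamp_def sum_subtractf diff_divide_distrib)

lemma Esamp_cmult: "Esamp n m (\<lambda>i j. c * X i j) = c * Esamp n m X"
  by (simp add: Esamp_def sum_distrib_left)

lemma Esamp_mono:
  assumes "\<And>i j. i < n \<Longrightarrow> j < m \<Longrightarrow> X i j \<le> Y i j"
  shows "Esamp n m X \<le> Esamp n m Y"
  unfolding Esamp_def
  by (intro divide_right_mono sum_mono) (auto intro: assms)

lemma wnorm2_scal: "wnorm2 (c *\<^sub>R mat 1) y = c * (y \<bullet> y)"
  unfolding wnorm2_def
  by (metis inner_scaleR_right matrix_vector_mul_lid scaleR_matrix_vector_assoc)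

lemma transp_inner: "(transpose (M::real^'a^'b) *v u) \<bullet> h = u \<bullet> (M *v h)"
  by (metis dot_lmul_matrix transpose_matrix_vector)

lemma norm_add_scaleR_sq:
  fixes u w :: "'a::real_inner"
  shows "(norm (u + t *\<^sub>R w))\<^sup>2 = (norm u)\<^sup>2 + 2 * t * (u \<bullet> w) + t\<^sup>2 * (norm w)\<^sup>2"
  unfolding power2_norm_eq_inner
  by (simp add: inner_add_left inner_add_right inner_commute power2_eq_square algebra_simps)

lemma real_quad_nonneg:
  fixes a b :: real
  assumes "b \<ge> 0" and "\<And>t. t > 0 \<Longrightarrow> t * a + t\<^sup>2 * b \<ge> 0"
  shows "a \<ge> 0"
proof (rule ccontr)
  assume "\<not> a \<ge> 0"
  hence a: "a < 0" by simp
  show False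
  proof (cases "b = 0")
    case True
    with assms(2)[of 1] a show False by simp
  next
    case False
    with assms(1) have b: "b > 0" by simp
    define t where "t = - a / (2 * b)"
    have t: "t > 0" using a b by (simp add: t_def field_simps)
    have "t * a + t\<^sup>2 * b = t * (a + t * b)" by (simp add: power2_eq_square algebra_simps)
    also have "a + t * b = a / 2" using b by (simp add: t_def field_simps)
    finally have "t * a + t\<^sup>2 * b = t * (a/2)" .
    moreover have "t * (a/2) < 0" using t a by (simp add: mult_pos_neg)
    ultimately have "t * a + t\<^sup>2 * b < 0" by linarith
    thus False using assms(2)[OF t] by linarith
  qed
qed

lemma variational:
  fixes A :: "real^'q^'p" and B :: "real^'l^'p"
  assumes C: "C \<ge> 0" and rho: "\<rho> \<ge> 0"
    and min: "\<And>z. v \<bullet> (xh - xk) + lk \<bullet> (A *v xh) + \<rho> / 2 * (norm (A *v xh + B *v w))\<^sup>2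
             + C * ((xh - xk) \<bullet> (xh - xk))
           \<le> v \<bullet> (z - xk) + lk \<bullet> (A *v z) + \<rho> / 2 * (norm (A *v z + B *v w))\<^sup>2
             + C * ((z - xk) \<bullet> (z - xk))"
  shows "(v + transpose A *v (lk + \<rho> *\<^sub>R (A *v xh + B *v w)) + (2 * C) *\<^sub>R (xh - xk)) \<bullet> (z - xh) \<ge> 0"
proof -
  define d where "d = z - xh"
  define a where "a = (v + transpose A *v (lk + \<rho> *\<^sub>R (A *v xh + B *v w)) + (2 * C) *\<^sub>R (xh - xk)) \<bullet> d"
  define b where "b = \<rho> / 2 * (norm (A *v d))\<^sup>2 + C * (d \<bullet> d)"
  have b0: "b \<ge> 0" unfolding b_def using C rho by simp
  have "a \<ge> 0"
  proof (rule real_quad_nonneg[OF b0])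
    fix t :: real assume "t > 0"
    have e1: "A *v (xh + t *\<^sub>R d) + B *v w = (A *v xh + B *v w) + t *\<^sub>R (A *v d)"
      by (simp add: matrix_vector_right_distrib matrix_vector_mult_scaleR)
    have e2: "(xh + t *\<^sub>R d - xk) \<bullet> (xh + t *\<^sub>R d - xk)
        = (xh - xk) \<bullet> (xh - xk) + 2 * t * ((xh - xk) \<bullet> d) + t\<^sup>2 * (d \<bullet> d)"
      using norm_add_scaleR_sq[of "xh - xk" t d]
      by (simp add: power2_norm_eq_inner algebra_simps)
    have e3: "a = v \<bullet> d + lk \<bullet> (A *v d) + \<rho> * ((A *v xh + B *v w) \<bullet> (A *v d)) + 2 * C * ((xh - xk) \<bullet> d)"
      unfolding a_def inner_add_left transp_inner
      by (simp add: inner_add_left inner_add_right inner_scaleR_left inner_scaleR_right)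
    have "v \<bullet> (xh + t *\<^sub>R d - xk) + lk \<bullet> (A *v (xh + t *\<^sub>R d))
          + \<rho> / 2 * (norm (A *v (xh + t *\<^sub>R d) + B *v w))\<^sup>2
          + C * ((xh + t *\<^sub>R d - xk) \<bullet> (xh + t *\<^sub>R d - xk))
        = (v \<bullet> (xh - xk) + lk \<bullet> (A *v xh) + \<rho> / 2 * (norm (A *v xh + B *v w))\<^sup>2
             + C * ((xh - xk) \<bullet> (xh - xk))) + (t * a + t\<^sup>2 * b)"
      unfolding e1 e2 norm_add_scaleR_sq e3 b_def
      by (simp add: inner_add_right inner_diff_right matrix_vector_right_distrib
            matrix_vector_mult_scaleR algebra_simps power2_eq_square)
    with min[of "xh + t *\<^sub>R d"] show "t * a + t\<^sup>2 * b \<ge> 0" by linarith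
  qed
  thus ?thesis by (simp add: a_def d_def)
qed


lemma gradF_formula:
  fixes g :: "nat \<Rightarrow> real^'q \<Rightarrow> real^'r" and Jg :: "nat \<Rightarrow> real^'q \<Rightarrow> real^'q^'r"
  assumes n: "n \<ge> 1" and m: "m \<ge> 1"
    and g_deriv: "\<And>j x. j < m \<Longrightarrow> (g j has_derivative (\<lambda>h. Jg j x *v h)) (at x)"
    and f_deriv: "\<And>i y. i < n \<Longrightarrow> (f i has_derivative (\<lambda>h. gradf i y \<bullet> h)) (at y)"
    and F_grad: "\<And>x. (Fobj n m f g has_derivative (\<lambda>h. gradF x \<bullet> h)) (at x)"
  shows "gradF x = (1 / (real n * real m)) *\<^sub>R
     (\<Sum>i<n. \<Sum>j<m. transpose (Jg j x) *v gradf i (gavg m g x))"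
proof -
  have ga: "gavg m g = (\<lambda>x. (1 / real m) *\<^sub>R (\<Sum>j<m. g j x))" by (rule ext) (simp add: gavg_def)
  have dg: "(gavg m g has_derivative (\<lambda>h. (1 / real m) *\<^sub>R (\<Sum>j<m. Jg j x *v h))) (at x)"
    unfolding ga by (intro has_derivative_scaleR_right has_derivative_sum g_deriv) auto
  have Fo: "Fobj n m f g = (\<lambda>x. (1 / real n) * (\<Sum>i<n. f i (gavg m g x)))"
    by (rule ext) (simp add: Fobj_def)
  have dF: "(Fobj n m f g has_derivative
      (\<lambda>h. (1 / real n) * (\<Sum>i<n. gradf i (gavg m g x) \<bullet> ((1 / real m) *\<^sub>R (\<Sum>j<m. Jg j x *v h))))) (at x)"
    unfolding Fo
    by (intro has_derivative_mult_right has_derivative_sum has_derivative_compose[OF dg] f_deriv) auto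
  have eq: "(\<lambda>h. gradF x \<bullet> h) = (\<lambda>h. (1 / real n) * (\<Sum>i<n. gradf i (gavg m g x) \<bullet> ((1 / real m) *\<^sub>R (\<Sum>j<m. Jg j x *v h))))"
    by (rule has_derivative_unique[OF F_grad dF])
  define G where "G = (1 / (real n * real m)) *\<^sub>R
     (\<Sum>i<n. \<Sum>j<m. transpose (Jg j x) *v gradf i (gavg m g x))"
  have "\<And>h. gradF x \<bullet> h = G \<bullet> h"
  proof -
    fix h
    have "gradF x \<bullet> h = (1 / real n) * (\<Sum>i<n. gradf i (gavg m g x) \<bullet> ((1 / real m) *\<^sub>R (\<Sum>j<m. Jg j x *v h)))"
      using fun_cong[OF eq, of h] by simp
    also have "\<dots> = G \<bullet> h"
      unfolding G_def inner_scaleR_left inner_sum_left transp_inner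
      by (simp add: inner_sum_right sum_distrib_left)
    finally show "gradF x \<bullet> h = G \<bullet> h" .
  qed
  from this[of "gradF x - G"] have "(gradF x - G) \<bullet> (gradF x - G) = 0"
    by (simp add: inner_diff_left)
  thus ?thesis unfolding G_def[symmetric] by simp
qed

lemma gradF_lip:
  fixes g :: "nat \<Rightarrow> real^'q \<Rightarrow> real^'r" and Jg :: "nat \<Rightarrow> real^'q \<Rightarrow> real^'q^'r"
  assumes n: "n \<ge> 1" and m: "m \<ge> 1"
    and form: "\<And>x. gradF x = (1 / (real n * real m)) *\<^sub>R
     (\<Sum>i<n. \<Sum>j<m. transpose (Jg j x) *v gradf i (gavg m g x))"
    and A4: "\<And>i j x y. i < n \<Longrightarrow> j < m \<Longrightarrow>
       norm (transpose (Jg j x) *v gradf i (gavg m g x) - transpose (Jg j y) *v gradf i (gavg m g y))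
         \<le> LF * norm (x - y)"
  shows "norm (gradF x - gradF y) \<le> LF * norm (x - y)"
proof -
  let ?T = "\<lambda>x i j. transpose (Jg j x) *v gradf i (gavg m g x)"
  have "gradF x - gradF y = (1 / (real n * real m)) *\<^sub>R (\<Sum>i<n. \<Sum>j<m. ?T x i j - ?T y i j)"
    unfolding form by (simp add: sum_subtractf scaleR_diff_right)
  hence "norm (gradF x - gradF y) = (1 / (real n * real m)) * norm (\<Sum>i<n. \<Sum>j<m. ?T x i j - ?T y i j)"
    by simp
  also have "norm (\<Sum>i<n. \<Sum>j<m. ?T x i j - ?T y i j) \<le> (\<Sum>i<n. \<Sum>j<m. norm (?T x i j - ?T y i j))"
    by (rule order_trans[OF norm_sum sum_mono]) (rule norm_sum)
  also have "\<dots> \<le> (\<Sum>i<n. \<Sum>j<m. LF * norm (x - y))"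
    by (intro sum_mono A4) auto
  finally show ?thesis using n m by (simp add: field_simps)
qed

lemma descent:
  fixes F :: "'a::real_inner \<Rightarrow> real"
  assumes d: "\<And>x. (F has_derivative (\<lambda>h. gF x \<bullet> h)) (at x)"
    and lip: "\<And>x y. norm (gF x - gF y) \<le> L * norm (x - y)"
  shows "F y \<le> F x + gF x \<bullet> (y - x) + L / 2 * (norm (y - x))\<^sup>2"
proof -
  define d where "d = y - x"
  define \<phi> where "\<phi> = (\<lambda>t. F (x + t *\<^sub>R d) - t * (gF x \<bullet> d) - L / 2 * t\<^sup>2 * (norm d)\<^sup>2)"
  define \<phi>' where "\<phi>' = (\<lambda>t. gF (x + t *\<^sub>R d) \<bullet> d - gF x \<bullet> d - L * t * (norm d)\<^sup>2)"
  have der: "DERIV \<phi> t :> \<phi>' t" for t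
  proof -
    have h1: "((\<lambda>t. x + t *\<^sub>R d) has_derivative (\<lambda>h. h *\<^sub>R d)) (at t)"
      by (auto intro!: derivative_eq_intros)
    have h2: "((\<lambda>t. F (x + t *\<^sub>R d)) has_derivative (\<lambda>h. gF (x + t *\<^sub>R d) \<bullet> (h *\<^sub>R d))) (at t)"
      using has_derivative_compose[OF h1 d] by simp
    have h3: "((\<lambda>t. F (x + t *\<^sub>R d)) has_field_derivative (gF (x + t *\<^sub>R d) \<bullet> d)) (at t)"
    proof -
      have e: "(\<lambda>h. gF (x + t *\<^sub>R d) \<bullet> (h *\<^sub>R d)) = (*) (gF (x + t *\<^sub>R d) \<bullet> d)"
        by (rule ext) simp
      show ?thesis unfolding has_field_derivative_def using h2 unfolding e .
    qed
    show ?thesis unfolding \<phi>_def \<phi>'_def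
      by (rule h3 derivative_eq_intros refl | simp add: power2_eq_square)+
  qed
  have "\<phi> 1 \<le> \<phi> 0"
  proof -
    obtain z where z: "0 < z" "z < 1" "\<phi> 1 - \<phi> 0 = (1 - 0) * \<phi>' z"
      using MVT2[of 0 1 \<phi> \<phi>'] der by auto
    have "gF (x + z *\<^sub>R d) \<bullet> d - gF x \<bullet> d = (gF (x + z *\<^sub>R d) - gF x) \<bullet> d"
      by (simp add: inner_diff_left)
    also have "\<dots> \<le> norm (gF (x + z *\<^sub>R d) - gF x) * norm d"
      by (rule norm_cauchy_schwarz)
    also have "\<dots> \<le> L * norm (z *\<^sub>R d) * norm d"
      using lip[of "x + z *\<^sub>R d" x] by (intro mult_right_mono) auto
    also have "\<dots> = L * z * (norm d)\<^sup>2" using z by (simp add: power2_eq_square)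
    finally have "\<phi>' z \<le> 0" unfolding \<phi>'_def by simp
    thus ?thesis using z by simp
  qed
  thus ?thesis unfolding \<phi>_def d_def by simp
qed

lemma convex_tangent:
  fixes F :: "'a::real_inner \<Rightarrow> real"
  assumes cvx: "convex_on UNIV F"
    and d: "\<And>x. (F has_derivative (\<lambda>h. gF x \<bullet> h)) (at x)"
  shows "F y \<ge> F x + gF x \<bullet> (y - x)"
proof -
  define dd where "dd = y - x"
  define \<psi> where "\<psi> = (\<lambda>t::real. F (x + t *\<^sub>R dd))"
  have cv: "convex_on UNIV \<psi>"
  proof (rule convex_onI)
    fix t a b :: real assume t: "t > 0" "t < 1"
    have "x + ((1 - t) *\<^sub>R a + t *\<^sub>R b) *\<^sub>R dd = (1 - t) *\<^sub>R (x + a *\<^sub>R dd) + t *\<^sub>R (x + b *\<^sub>R dd)"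
      by (simp add: algebra_simps)
    thus "\<psi> ((1 - t) *\<^sub>R a + t *\<^sub>R b) \<le> (1 - t) * \<psi> a + t * \<psi> b"
      unfolding \<psi>_def using convex_onD[OF cvx, of t "x + a *\<^sub>R dd" "x + b *\<^sub>R dd"] t by simp
  qed simp
  have h1: "((\<lambda>t. x + t *\<^sub>R dd) has_derivative (\<lambda>h. h *\<^sub>R dd)) (at 0)"
    by (auto intro!: derivative_eq_intros)
  have h2: "(\<psi> has_derivative (\<lambda>h. gF (x + 0 *\<^sub>R dd) \<bullet> (h *\<^sub>R dd))) (at 0)"
    unfolding \<psi>_def using has_derivative_compose[OF h1 d] by simp
  have h3: "(\<psi> has_field_derivative (gF x \<bullet> dd)) (at 0 within UNIV)"
  proof -
    have e: "(\<lambda>h. gF (x + 0 *\<^sub>R dd) \<bullet> (h *\<^sub>R dd)) = (*) (gF x \<bullet> dd)"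
      by (rule ext) simp
    show ?thesis unfolding has_field_derivative_def using h2 unfolding e by simp
  qed
  have "\<psi> 1 - \<psi> 0 \<ge> (gF x \<bullet> dd) * (1 - 0)"
    by (rule convex_on_imp_above_tangent[OF cv _ _ _ h3]) auto
  thus ?thesis unfolding \<psi>_def dd_def by simp
qed

theorem lemma8:
  fixes n m :: nat
    and g :: "nat \<Rightarrow> real^'q \<Rightarrow> real^'r"
    and Jg :: "nat \<Rightarrow> real^'q \<Rightarrow> real^'q^'r"
    and f :: "nat \<Rightarrow> real^'r \<Rightarrow> real"
    and gradf :: "nat \<Rightarrow> real^'r \<Rightarrow> real^'r"
    and gradF :: "real^'q \<Rightarrow> real^'q"
    and R :: "real^'l \<Rightarrow> real"
    and A :: "real^'q^'p" and B :: "real^'l^'p"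
    and xs :: "real^'q" and ws :: "real^'l" and ls :: "real^'p"
    and LF \<rho> :: real
    and s K k :: nat
    and cs :: "nat \<Rightarrow> real" and Gs :: "nat \<Rightarrow> real^'q^'q"
    and xt xk :: "real^'q" and lk :: "real^'p" and w1 :: "real^'l"
    and xn :: "nat \<Rightarrow> nat \<Rightarrow> real^'q"
  assumes n_pos: "n \<ge> 1" and m_pos: "m \<ge> 1"
    \<comment> \<open>smoothness: g_j continuously differentiable with Jacobian Jg j\<close>
    and g_deriv: "\<And>j x. j < m \<Longrightarrow> (g j has_derivative (\<lambda>h. Jg j x *v h)) (at x)"
    and Jg_cont: "\<And>j. j < m \<Longrightarrow> continuous_on UNIV (Jg j)"
    \<comment> \<open>f_i continuously differentiable with gradient gradf i\<close>
    and f_deriv: "\<And>i y. i < n \<Longrightarrow> (f i has_derivative (\<lambda>h. gradf i y \<bullet> h)) (at y)"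
    and gradf_cont: "\<And>i. i < n \<Longrightarrow> continuous_on UNIV (gradf i)"
    \<comment> \<open>gradF is the gradient of F\<close>
    and F_grad: "\<And>x. (Fobj n m f g has_derivative (\<lambda>h. gradF x \<bullet> h)) (at x)"
    \<comment> \<open>(A1)\<close>
    and F_i_convex: "\<And>i. i < n \<Longrightarrow> convex_on UNIV (\<lambda>x. f i (gavg m g x))"
    and R_convex: "convex_on UNIV R"
    and opt: "primal_dual_opt (Fobj n m f g) R A B xs ws ls"
    \<comment> \<open>(A4)\<close>
    and LF_pos: "LF > 0"
    and A4: "\<And>i j x y. i < n \<Longrightarrow> j < m \<Longrightarrow>
       norm (transpose (Jg j x) *v gradf i (gavg m g x) - transpose (Jg j y) *v gradf i (gavg m g y))
         \<le> LF * norm (x - y)"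
    \<comment> \<open>Algorithm 2 parameters, parameter choice (P1), stage s, inner iteration k\<close>
    and rho_pos: "\<rho> > 0"
    and s_pos: "s \<ge> 1" and K_pos: "K \<ge> 1" and k_lt: "k < K"
    and Gs_def: "\<And>t. t \<le> K \<Longrightarrow> Gs t = cs t *\<^sub>R mat 1"
    and cs_0: "cs 0 = 1 / real s"
    and cs_mono: "\<And>t. t < K \<Longrightarrow> cs (Suc t) \<le> cs t"
    and cs_last: "cs (K - 1) = 1 / real (s + 1)" "cs K = 1 / real (s + 1)"
    \<comment> \<open>step (a): w1 = omega^{k+1}\<close>
    and step_a: "\<And>w. R w1 + lk \<bullet> (B *v w1) + \<rho> / 2 * (norm (A *v xk + B *v w1))\<^sup>2
                   \<le> R w + lk \<bullet> (B *v w) + \<rho> / 2 * (norm (A *v xk + B *v w))\<^sup>2"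
    \<comment> \<open>step (d): xn i j = x^{k+1} when (i_k, j_k) = (i, j), with eta_s = 1/((s+1) LF)\<close>
    and step_d: "\<And>i j x. i < n \<Longrightarrow> j < m \<Longrightarrow>
       (let v = transpose (Jg j xk) *v gradf i (gavg m g xk)
                - transpose (Jg j xt) *v gradf i (gavg m g xt) + gradF xt;
            \<eta> = 1 / (real (s + 1) * LF)
        in v \<bullet> (xn i j - xk) + lk \<bullet> (A *v xn i j) + \<rho> / 2 * (norm (A *v xn i j + B *v w1))\<^sup>2
             + 1 / (2 * \<eta>) * wnorm2 (Gs k) (xn i j - xk)
           \<le> v \<bullet> (x - xk) + lk \<bullet> (A *v x) + \<rho> / 2 * (norm (A *v x + B *v w1))\<^sup>2
             + 1 / (2 * \<eta>) * wnorm2 (Gs k) (x - xk))"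
    \<comment> \<open>(A1): all x-points arising lie in a bounded set\<close>
    and bdd: "\<exists>X. bounded X \<and> xk \<in> X \<and> xt \<in> X \<and> (\<forall>i<n. \<forall>j<m. xn i j \<in> X)"
  shows
    "(let \<eta> = 1 / (real (s + 1) * LF);
          vhat = (\<lambda>i j. transpose (Jg j xk) *v gradf i (gavg m g xk)
                - transpose (Jg j xt) *v gradf i (gavg m g xt) + gradF xt);
          ln = (\<lambda>i j. lk + \<rho> *\<^sub>R (A *v xn i j + B *v w1));
          F = Fobj n m f g
      in Esamp n m (\<lambda>i j. wnorm2 (Gs k) (xn i j - xs))
         \<le> Esamp n m (\<lambda>i j. wnorm2 (Gs k) (xk - xs))
           - 2 * \<eta> * Esamp n m (\<lambda>i j. F (xn i j) - F xs)
           - 2 * \<eta> * Esamp n m (\<lambda>i j. (vhat i j - gradF xk) \<bullet> (xn i j - xs))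
           + 2 * \<eta> * Esamp n m (\<lambda>i j. (transpose A *v ln i j) \<bullet> (xs - xn i j)))"
proof -
  define \<eta> where "\<eta> = 1 / (real (s + 1) * LF)"
  define F where "F = Fobj n m f g"
  define c where "c = cs k"
  have form: "\<And>x. gradF x = (1 / (real n * real m)) *\<^sub>R
     (\<Sum>i<n. \<Sum>j<m. transpose (Jg j x) *v gradf i (gavg m g x))"
    by (rule gradF_formula[OF n_pos m_pos g_deriv f_deriv F_grad]) auto
  have lip: "\<And>x y. norm (gradF x - gradF y) \<le> LF * norm (x - y)"
    by (rule gradF_lip[OF n_pos m_pos form A4]) auto
  have Fd: "\<And>x. (F has_derivative (\<lambda>h. gradF x \<bullet> h)) (at x)"
    unfolding F_def by (rule F_grad)
  have cvx: "convex_on UNIV F"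
  proof (rule convex_onI)
    fix t :: real and x y :: "real^'q" assume t: "t > 0" "t < 1"
    have "(\<Sum>i<n. f i (gavg m g ((1 - t) *\<^sub>R x + t *\<^sub>R y)))
        \<le> (\<Sum>i<n. (1 - t) * f i (gavg m g x) + t * f i (gavg m g y))"
      by (rule sum_mono) (use convex_onD[OF F_i_convex] t in auto)
    also have "\<dots> = (1 - t) * (\<Sum>i<n. f i (gavg m g x)) + t * (\<Sum>i<n. f i (gavg m g y))"
      by (simp add: sum.distrib sum_distrib_left)
    finally show "F ((1 - t) *\<^sub>R x + t *\<^sub>R y) \<le> (1 - t) * F x + t * F y"
      unfolding F_def Fobj_def using n_pos
      by (simp add: field_simps divide_right_mono)
  qed simp
  have c_ge_aux: "\<And>d. k + d \<le> K \<Longrightarrow> cs (k + d) \<le> cs k"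
  proof -
    fix d show "k + d \<le> K \<Longrightarrow> cs (k + d) \<le> cs k"
    proof (induction d)
      case 0 then show ?case by simp
    next
      case (Suc d)
      then have "cs (Suc (k + d)) \<le> cs (k + d)" using cs_mono[of "k + d"] by simp
      with Suc show ?case by simp
    qed
  qed
  have c_ge: "c \<ge> 1 / real (s + 1)"
    using c_ge_aux[of "K - k"] k_lt cs_last(2) unfolding c_def by simp
  have c_pos: "c > 0" using c_ge by (smt (verit) divide_pos_pos of_nat_0_less_iff zero_less_Suc add.commute plus_1_eq_Suc)
  have eta_pos: "\<eta> > 0" using LF_pos by (simp add: \<eta>_def)
  have etaL: "\<eta> * LF = 1 / real (s + 1)" using LF_pos by (simp add: \<eta>_def)
  have Gk: "Gs k = c *\<^sub>R mat 1" using Gs_def[of k] k_lt by (simp add: c_def)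
  let ?vhat = "\<lambda>i j. transpose (Jg j xk) *v gradf i (gavg m g xk)
                - transpose (Jg j xt) *v gradf i (gavg m g xt) + gradF xt"
  let ?ln = "\<lambda>i j. lk + \<rho> *\<^sub>R (A *v xn i j + B *v w1)"
  have pt: "c * ((xn i j - xs) \<bullet> (xn i j - xs))
      \<le> c * ((xk - xs) \<bullet> (xk - xs)) - 2 * \<eta> * (F (xn i j) - F xs)
        - 2 * \<eta> * ((?vhat i j - gradF xk) \<bullet> (xn i j - xs))
        + 2 * \<eta> * ((transpose A *v ?ln i j) \<bullet> (xs - xn i j))"
    if i: "i < n" and j: "j < m" for i j
  proof -
    define v where "v = ?vhat i j"
    define x1 where "x1 = xn i j"
    define C where "C = 1 / (2 * \<eta>) * c"
    have C0: "C \<ge> 0" using c_pos eta_pos by (simp add: C_def)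
    have var: "(v + transpose A *v (lk + \<rho> *\<^sub>R (A *v x1 + B *v w1)) + (2 * C) *\<^sub>R (x1 - xk)) \<bullet> (xs - x1) \<ge> 0"
    proof (rule variational[OF C0])
      show "\<rho> \<ge> 0" using rho_pos by simp
      fix z
      show "v \<bullet> (x1 - xk) + lk \<bullet> (A *v x1) + \<rho> / 2 * (norm (A *v x1 + B *v w1))\<^sup>2
             + C * ((x1 - xk) \<bullet> (x1 - xk))
           \<le> v \<bullet> (z - xk) + lk \<bullet> (A *v z) + \<rho> / 2 * (norm (A *v z + B *v w1))\<^sup>2
             + C * ((z - xk) \<bullet> (z - xk))"
        using step_d[OF i j, of z] unfolding Let_def Gk wnorm2_scal
        by (simp add: v_def x1_def C_def \<eta>_def mult.assoc)
    qed
    define a where "a = (x1 - xk) \<bullet> (x1 - xs)"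
    define p where "p = v \<bullet> (x1 - xs)"
    define q where "q = (transpose A *v ?ln i j) \<bullet> (x1 - xs)"
    define r where "r = gradF xk \<bullet> (x1 - xs)"
    define D where "D = (x1 - xk) \<bullet> (x1 - xk)"
    define E where "E = (xk - xs) \<bullet> (xk - xs)"
    have twoC: "2 * C = c / \<eta>" using eta_pos by (simp add: C_def)
    have v1: "- p - q - (c / \<eta>) * a \<ge> 0"
    proof -
      have "(v + transpose A *v (lk + \<rho> *\<^sub>R (A *v x1 + B *v w1)) + (2 * C) *\<^sub>R (x1 - xk)) \<bullet> (xs - x1)
          = - p - q - (c / \<eta>) * a"
        unfolding p_def q_def a_def twoC x1_def
        by (simp add: inner_add_left inner_diff_right algebra_simps)
      with var show ?thesis by simp
    qed
    hence v2: "\<eta> * (- p - q) - c * a \<ge> 0"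
      using mult_left_mono[OF v1, of \<eta>] eta_pos by (simp add: algebra_simps)
    have idn: "(x1 - xs) \<bullet> (x1 - xs) = E - D + 2 * a"
      unfolding E_def D_def a_def by (simp add: algebra_simps inner_diff_left inner_diff_right inner_commute)
    have desc: "F x1 \<le> F xk + gradF xk \<bullet> (x1 - xk) + LF / 2 * D"
      using descent[OF Fd lip, of x1 xk] unfolding D_def by (simp add: power2_norm_eq_inner)
    have tang: "F xs \<ge> F xk + gradF xk \<bullet> (xs - xk)"
      by (rule convex_tangent[OF cvx Fd])
    have rr: "r = gradF xk \<bullet> (x1 - xk) - gradF xk \<bullet> (xs - xk)"
      unfolding r_def by (simp add: inner_diff_right)
    have Fb: "F x1 - F xs \<le> r + LF / 2 * D" using desc tang rr by linarith
    have Fb2: "\<eta> * (F x1 - F xs) \<le> \<eta> * r + (\<eta> * LF) / 2 * D"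
      using mult_left_mono[OF Fb, of \<eta>] eta_pos by (simp add: algebra_simps)
    have D0: "D \<ge> 0" unfolding D_def by simp
    have cD: "(\<eta> * LF) * D \<le> c * D" using mult_right_mono[OF _ D0, of "\<eta> * LF" c] c_ge etaL by simp
    have pq: "(v - gradF xk) \<bullet> (x1 - xs) = p - r" unfolding p_def r_def by (simp add: inner_diff_left)
    have qq: "(transpose A *v ?ln i j) \<bullet> (xs - x1) = - q" unfolding q_def
      by (metis inner_minus_right minus_diff_eq)
    have "c * ((x1 - xs) \<bullet> (x1 - xs))
      \<le> c * E - 2 * \<eta> * (F x1 - F xs) - 2 * \<eta> * (p - r) + 2 * \<eta> * (- q)"
      unfolding idn using v2 Fb2 cD by (simp add: algebra_simps)
    thus ?thesis unfolding pq[unfolded v_def x1_def] qq[unfolded x1_def] E_def x1_def v_def .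
  qed
  have "Esamp n m (\<lambda>i j. wnorm2 (Gs k) (xn i j - xs))
     \<le> Esamp n m (\<lambda>i j. c * ((xk - xs) \<bullet> (xk - xs)) - 2 * \<eta> * (F (xn i j) - F xs)
        - 2 * \<eta> * ((?vhat i j - gradF xk) \<bullet> (xn i j - xs))
        + 2 * \<eta> * ((transpose A *v ?ln i j) \<bullet> (xs - xn i j)))"
    unfolding Gk wnorm2_scal by (rule Esamp_mono) (rule pt)
  also have "\<dots> = Esamp n m (\<lambda>i j. wnorm2 (Gs k) (xk - xs))
           - 2 * \<eta> * Esamp n m (\<lambda>i j. F (xn i j) - F xs)
           - 2 * \<eta> * Esamp n m (\<lambda>i j. (?vhat i j - gradF xk) \<bullet> (xn i j - xs))
           + 2 * \<eta> * Esamp n m (\<lambda>i j. (transpose A *v ?ln i j) \<bullet> (xs - xn i j))"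
    unfolding Gk wnorm2_scal Esamp_add Esamp_diff Esamp_cmult ..
  finally show ?thesis unfolding Let_def \<eta>_def F_def .
qed

end
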